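(* Every pair of elements of $\mathrm{SO}(3)$ is strongly doubly reversible.
   Context: A pair $(g_1,g_2)$ in a group $G$ is strongly doubly reversible if there is $g\in G$ with $g^2=1$ such that $g g_1 g^{-1}=g_1^{-1}$ and $g g_2 g^{-1}=g_2^{-1}$. *)

theory Defs
  imports "HOL-Analysis.Analysis"
begin

definition SO3 :: "(real^3^3) set" where
  "SO3 = {A. orthogonal_matrix A \<and> det A = 1}"

definition strongly_doubly_reversible_SO3 :: "real^3^3 \<Rightarrow> real^3^3 \<Rightarrow> bool" where
  "strongly_doubly_reversible_SO3 g1 g2 \<longleftrightarrow>
     (\<exists>g\<in>SO3. g ** g = mat 1 \<and>
        g ** g1 ** matrix_inv g = matrix_inv g1 \<and>
        g ** g2 ** matrix_inv g = matrix_inv g2)"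

end

theory Submission
  imports Defs
begin

lemma orth_inner:
  fixes M :: "real^'n^'n"
  assumes "orthogonal_matrix M"
  shows "(M *v x) \<bullet> (M *v y) = x \<bullet> y"
proof -
  have "(M *v x) \<bullet> (M *v y) = (x v* transpose M) \<bullet> (M *v y)" by simp
  also have "\<dots> = x \<bullet> (transpose M *v (M *v y))" by (rule dot_lmul_matrix)
  also have "transpose M *v (M *v y) = y"
    using assms by (simp add: matrix_vector_mul_assoc orthogonal_matrix_def)
  finally show ?thesis .
qed

lemma mv_neg: "(M::real^'n^'m) *v (- x) = - (M *v x)"
  by (simp add: matrix_vector_mult_def vec_eq_iff sum_negf)

lemma det_neg3: "det (- (B::real^3^3)) = - det B"
  by (simp add: det_3 algebra_simps)

lemma fixed_vec:
  fixes A :: "real^3^3"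
  assumes "rotation_matrix A"
  obtains v where "v \<noteq> 0" "A *v v = v"
proof -
  have o: "A ** transpose A = mat 1" and d: "det A = 1"
    using assms by (auto simp: rotation_matrix_def orthogonal_matrix_def)
  have "A - mat 1 = A ** (mat 1 - transpose A)"
  proof -
    have t: "\<And>x. A *v (transpose A *v x) = x"
      by (simp only: matrix_vector_mul_assoc o matrix_vector_mul_lid)
    show ?thesis unfolding matrix_eq
      by (simp add: matrix_vector_mul_assoc[symmetric] matrix_vector_mult_diff_rdistrib
         matrix_vector_mult_diff_distrib t del: transpose_matrix_vector)
  qed
  hence "det (A - mat 1) = det (mat 1 - transpose A)"
    by (simp add: det_mul d)
  also have "mat 1 - transpose A = transpose (mat 1 - A)"
    by (simp add: transpose_def mat_def vec_eq_iff)
  also have "det (transpose (mat 1 - A)) = det (- (A - mat 1))" by simp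
  also have "\<dots> = - det (A - mat 1)" by (rule det_neg3)
  finally have "det (A - mat 1) = 0" by simp
  hence "rank (A - mat 1) \<noteq> CARD(3)" by (simp add: det_eq_0_rank)
  then obtain x where "x \<noteq> 0" "(A - mat 1) *v x = 0"
    using matrix_nonfull_linear_equations_eq by blast
  hence "A *v x = x" by (simp add: matrix_vector_mult_diff_rdistrib)
  with \<open>x \<noteq> 0\<close> show ?thesis using that by blast
qed

lemma half_turn:
  fixes M :: "real^3^3"
  assumes M: "rotation_matrix M" and a: "a \<noteq> 0" "M *v a = - a"
  shows "M ** M = mat 1"
proof -
  have oM: "orthogonal_matrix M" using M by (simp add: rotation_matrix_def)
  obtain b where b: "b \<noteq> 0" "M *v b = b" using fixed_vec[OF M] by blast
  have "b \<bullet> a = (M *v b) \<bullet> (M *v a)" using orth_inner[OF oM] by simp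
  also have "\<dots> = - (b \<bullet> a)" using a b by simp
  finally have ab: "a \<bullet> b = 0" by (simp add: inner_commute)
  define c where "c = cross3 a b"
  have Mc: "M *v c = - c"
    using cross_rotation_matrix[OF M, of a b] a b by (simp add: c_def)
  have "(norm c)\<^sup>2 = (norm a * norm b)\<^sup>2"
    using norm_cross_dot[of a b] ab by (simp add: c_def)
  hence c0: "c \<noteq> 0" using a b by auto
  have ac: "a \<bullet> c = 0" and bc: "b \<bullet> c = 0" by (simp_all add: c_def dot_cross_self)
  have dist: "a \<noteq> b" "a \<noteq> c" "b \<noteq> c" using ab ac bc a b c0 by auto
  let ?S = "{a, b, c}"
  have po: "pairwise orthogonal ?S"
    using ab ac bc by (auto simp: pairwise_def orthogonal_def inner_commute)
  have ind: "independent ?S"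
    by (rule pairwise_orthogonal_independent[OF po]) (use a b c0 in auto)
  have "card ?S = 3" using dist by auto
  hence "dim ?S = DIM(real^3)" using dim_eq_card_independent[OF ind] by simp
  hence sp: "span ?S = UNIV" using dim_eq_full by blast
  have "\<And>x. (M ** M) *v x = x"
  proof -
    fix x :: "real^3"
    have xs: "x \<in> span ?S" using sp by simp
    have l1: "linear (\<lambda>x. (M ** M) *v x)" by (rule matrix_vector_mul_linear)
    have l2: "linear (\<lambda>x::real^3. x)" by (rule linear_ident)
    show "(M ** M) *v x = x"
      by (rule real_vector.linear_eq_on[OF l1 l2 xs]) (use a b Mc in \<open>auto simp: matrix_vector_mul_assoc[symmetric] mv_neg\<close>)
  qed
  thus ?thesis by (simp add: matrix_eq)
qed

lemma matrix_inv_eq: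
  fixes A B :: "real^'n^'n"
  assumes "A ** B = mat 1" "B ** A = mat 1"
  shows "matrix_inv A = B"
proof -
  have "\<exists>C::real^'n^'n. A ** C = mat 1 \<and> C ** A = mat 1" using assms by blast
  hence C: "A ** matrix_inv A = mat 1 \<and> matrix_inv A ** A = mat 1"
    unfolding matrix_inv_def by (rule someI_ex)
  have "matrix_inv A = matrix_inv A ** (A ** B)" using assms by simp
  also have "\<dots> = B" using C by (simp add: matrix_mul_assoc)
  finally show ?thesis .
qed

lemma reflect_conj:
  fixes A g :: "real^3^3"
  assumes A: "rotation_matrix A" and g: "rotation_matrix g"
    and a: "a \<noteq> 0" "A *v a = a" "g *v a = - a"
  shows "g ** A ** g = transpose A"
proof -
  have r: "rotation_matrix (A ** g)"
    using A g by (auto simp: rotation_matrix_def orthogonal_matrix_mul det_mul)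
  have "(A ** g) *v a = - a"
    using a by (simp add: matrix_vector_mul_assoc[symmetric] mv_neg)
  hence h: "(A ** g) ** (A ** g) = mat 1" by (rule half_turn[OF r a(1)])
  have tA: "transpose A ** A = mat 1" using A by (simp add: rotation_matrix_def orthogonal_matrix_def)
  have "transpose A = transpose A ** ((A ** g) ** (A ** g))" using h by simp
  also have "\<dots> = (transpose A ** A) ** (g ** A ** g)" by (simp add: matrix_mul_assoc)
  finally show ?thesis using tA by simp
qed

theorem corollary3p4:
  assumes "g1 \<in> SO3" and "g2 \<in> SO3"
  shows "strongly_doubly_reversible_SO3 g1 g2"
proof -
  have r1: "rotation_matrix g1" and r2: "rotation_matrix g2"
    using assms by (auto simp: SO3_def rotation_matrix_def)
  obtain a1 where a1: "a1 \<noteq> 0" "g1 *v a1 = a1" using fixed_vec[OF r1] by blast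
  obtain a2 where a2: "a2 \<noteq> 0" "g2 *v a2 = a2" using fixed_vec[OF r2] by blast
  have "dim {a1, a2} \<le> card {a1, a2}" by (rule dim_le_card) (auto intro: span_base)
  also have "\<dots> \<le> 2" by (simp add: card_insert_le_m1)
  finally have dlt: "dim {a1, a2} < DIM(real^3)" by simp
  then obtain v :: "real^3" where v: "v \<noteq> 0" "\<And>y. y \<in> span {a1, a2} \<Longrightarrow> orthogonal v y"
    using orthogonal_to_subspace_exists[OF dlt] by blast
  define u where "u = v /\<^sub>R norm v"
  have u1: "u \<bullet> u = 1" using v by (simp add: u_def inner_commute dot_square_norm power2_eq_square)
  have ua1: "u \<bullet> a1 = 0" and ua2: "u \<bullet> a2 = 0"
  proof -
    have "a1 \<in> span {a1, a2}" "a2 \<in> span {a1, a2}" by (simp_all add: span_base)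
    thus "u \<bullet> a1 = 0" "u \<bullet> a2 = 0"
      using v(2)[of a1] v(2)[of a2] by (auto simp: u_def orthogonal_def)
  qed
  have s: "u$1 * u$1 + u$2 * u$2 + u$3 * u$3 = 1" using u1 by (simp add: inner_vec_def sum_3)
  define g :: "real^3^3" where "g = (\<chi> i j. 2 * u$i * u$j - (if i = j then 1 else 0))"
  have gv: "\<And>x. g *v x = (u \<bullet> x) *\<^sub>R (u + u) - x"
    by (simp add: g_def matrix_vector_mult_def vec_eq_iff inner_vec_def sum_3 forall_3 algebra_simps)
  have gt: "transpose g = g" by (simp add: g_def transpose_def vec_eq_iff mult.commute)
  have gg: "g ** g = mat 1"
  proof -
    have "\<And>x. (g ** g) *v x = x"
    proof -
      fix x :: "real^3"
      have ip: "u \<bullet> ((u \<bullet> x) *\<^sub>R (u + u) - x) = u \<bullet> x"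
        unfolding inner_diff_right inner_scaleR_right inner_add_right u1 by simp
      have "g *v (g *v x) = x" unfolding gv ip by simp
      thus "(g ** g) *v x = x" by (simp add: matrix_vector_mul_assoc)
    qed
    thus ?thesis by (simp add: matrix_eq)
  qed
  have dg: "det g = 1"
    using s by (simp add: det_3 g_def) algebra
  have rg: "rotation_matrix g"
    using gg gt dg by (simp add: rotation_matrix_def orthogonal_matrix_def)
  have ig: "matrix_inv g = g" by (rule matrix_inv_eq[OF gg gg])
  have i1: "matrix_inv g1 = transpose g1"
    using r1 by (intro matrix_inv_eq) (auto simp: rotation_matrix_def orthogonal_matrix_def)
  have i2: "matrix_inv g2 = transpose g2"
    using r2 by (intro matrix_inv_eq) (auto simp: rotation_matrix_def orthogonal_matrix_def)
  have ga1: "g *v a1 = - a1" using gv ua1 by simp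
  have ga2: "g *v a2 = - a2" using gv ua2 by simp
  have "g \<in> SO3" using rg by (simp add: SO3_def rotation_matrix_def)
  moreover have "g ** g1 ** matrix_inv g = matrix_inv g1"
    using reflect_conj[OF r1 rg a1 ga1] ig i1 by simp
  moreover have "g ** g2 ** matrix_inv g = matrix_inv g2"
    using reflect_conj[OF r2 rg a2 ga2] ig i2 by simp
  ultimately show ?thesis unfolding strongly_doubly_reversible_SO3_def using gg by blast
qed

end
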